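(* Let $p$ be a prime, $m,t\ge 1$, $B=\mathrm{GF}(p^m)$ and $F=\mathrm{GF}(p^{mt})$, and assume that $t$ is divisible by $p$ (the characteristic of $F$). Let $n=|F|=|B|^t$, $k=n(1-1/|B|)$, and let $\mathcal{C}=\mathrm{RS}(F,k)=\{(f(\alpha))_{\alpha\in F} : f\in F[x],\ \deg f<k\}$, where the symbol $f(\alpha)$ is stored at the node indexed by $\alpha$. Then for any two distinct $\alpha^*,\overline{\alpha}\in F$ whose symbols are erased, there is a distributed repair scheme (Distributed Repair Scheme II) with total repair bandwidth $2(n-1)$ sub-symbols (elements of $B$): each of the two replacement nodes (for $f(\alpha^* )$ and for $f(\overline{\alpha})$) downloads one sub-symbol from each of the $n-2$ surviving nodes (computed from that node's stored symbol) and one sub-symbol from the other replacement node (computed from the data that replacement node has downloaded from the surviving nodes), and from these $n-1$ sub-symbols recovers its erased symbol.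
   Context: Elements of $F$ are called symbols and elements of $B$ sub-symbols. The trace is $\mathrm{Tr}_{F/B}(x)=\sum_{i=0}^{t-1}x^{|B|^i}$. In distributed repair, each erased symbol is reconstructed at its own replacement node; the replacement nodes download data from the surviving nodes and may also exchange data among themselves. The repair bandwidth is the total number of sub-symbols downloaded by all replacement nodes. *)

theory Defs
  imports "HOL-Computational_Algebra.Polynomial" "HOL-Library.Cardinality"
begin

text \<open>The subfield B = GF(p^m) of a field F = GF(p^(m t)), realised as the set of
  fixed points of the Frobenius power x \<mapsto> x^(p^m).\<close>
definition subfield_GF :: "nat \<Rightarrow> nat \<Rightarrow> 'a::field set" where
  "subfield_GF p m = {x. x ^ (p ^ m) = x}"

definition trace_FB :: "nat \<Rightarrow> nat \<Rightarrow> 'a::field \<Rightarrow> 'a" where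
  "trace_FB q t x = (\<Sum>i<t. x ^ (q ^ i))"

definition RS_code :: "nat \<Rightarrow> ('a::{field,finite} \<Rightarrow> 'a) set" where
  "RS_code k = {(\<lambda>\<alpha>. poly f \<alpha>) | f. degree f < k}"

text \<open>Each surviving node beta sends one sub-symbol g1 beta (c beta)
  to replacement node 1 and one sub-symbol g2 beta (c beta) to replacement node 2.
  Replacement node i then sends one sub-symbol h_i (computed from its downloads) to the
  other replacement node.  Node 1 recovers c a1 from its downloads plus the sub-symbol
  from node 2 (and symmetrically).  Downloads are modelled as functions on nodes, set
  to 0 outside the set of surviving nodes, so only surviving data is used.\<close>
definition distributed_repair_two ::
  "'a::{field,finite} set \<Rightarrow> ('a \<Rightarrow> 'a) set \<Rightarrow> 'a \<Rightarrow> 'a \<Rightarrow> bool" where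
  "distributed_repair_two B C a1 a2 \<longleftrightarrow>
    (\<exists>(g1::'a \<Rightarrow> 'a \<Rightarrow> 'a) (g2::'a \<Rightarrow> 'a \<Rightarrow> 'a)
       (h1::('a \<Rightarrow> 'a) \<Rightarrow> 'a) (h2::('a \<Rightarrow> 'a) \<Rightarrow> 'a)
       (r1::('a \<Rightarrow> 'a) \<Rightarrow> 'a \<Rightarrow> 'a) (r2::('a \<Rightarrow> 'a) \<Rightarrow> 'a \<Rightarrow> 'a).
       (\<forall>\<beta> x. g1 \<beta> x \<in> B \<and> g2 \<beta> x \<in> B) \<and>
       (\<forall>d. h1 d \<in> B \<and> h2 d \<in> B) \<and>
       (\<forall>c\<in>C.
          let S = UNIV - {a1, a2};
              d1 = (\<lambda>\<beta>. if \<beta> \<in> S then g1 \<beta> (c \<beta>) else 0);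
              d2 = (\<lambda>\<beta>. if \<beta> \<in> S then g2 \<beta> (c \<beta>) else 0)
          in r1 d1 (h2 d2) = c a1 \<and> r2 d2 (h1 d1) = c a2))"

text \<open>Total bandwidth (in sub-symbols) of such a scheme: each replacement node downloads
  one sub-symbol per surviving node plus one from the other replacement node.\<close>
definition repair_two_bandwidth :: "'a::finite \<Rightarrow> 'a \<Rightarrow> nat" where
  "repair_two_bandwidth a1 a2 = 2 * (card (UNIV - {a1, a2}) + 1)"

end

theory Submission imports Defs "HOL-Computational_Algebra.Primes"
begin


lemma of_nat_card_zero: "of_nat CARD('a::{field,finite}) = (0::'a)"
proof -
  have "(\<Sum>y\<in>UNIV. (1::'a) + y) = (\<Sum>y\<in>UNIV. y)"
    by (rule sum.reindex_bij_witness[of _ "\<lambda>y. y - 1" "\<lambda>y. 1 + y"]) auto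
  thus ?thesis by (simp add: sum.distrib)
qed

lemma CHAR_dvd_CARD': "CHAR('a::{field,finite}) dvd CARD('a)"
  using of_nat_card_zero[where 'a='a] of_nat_eq_0_iff_char_dvd by blast

lemma char_eq:
  assumes "prime p" "CARD('a::{field,finite}) = p ^ k" "k \<ge> 1"
  shows "CHAR('a) = p"
proof -
  have d: "CHAR('a) dvd p ^ k" using CHAR_dvd_CARD'[where 'a='a] assms by simp
  have pos: "CHAR('a) > 0" by (simp add: finite_imp_CHAR_pos)
  have pr: "prime CHAR('a)" using prime_CHAR_semidom[OF pos] .
  have "CHAR('a) dvd p" using prime_dvd_power[OF pr d] .
  thus ?thesis using pr assms(1) by (simp add: primes_dvd_imp_eq)
qed

lemma pow_card_same: "(x::'a::{field,finite}) ^ CARD('a) = x"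
proof (cases "x = 0")
  case False
  have "x * (\<Prod>y\<in>UNIV-{0}. x * y) = x * x ^ (card (UNIV :: 'a set) - 1) * \<Prod>(UNIV-{0})"
    by (simp add: prod.distrib mult_ac)
  also have "x * x ^ (card (UNIV :: 'a set) - 1) = x ^ Suc (card (UNIV :: 'a set) - 1)"
    by (subst power_Suc) auto
  also have "Suc (card (UNIV :: 'a set) - 1) = card (UNIV :: 'a set)"
    using finite_UNIV_card_ge_0[where ?'a = 'a] by simp
  also have "(\<Prod>y\<in>UNIV-{0}. x * y) = (\<Prod>y\<in>UNIV-{0}. y)"
    by (rule prod.reindex_bij_witness[of _ "\<lambda>y. y / x" "\<lambda>y. x * y"]) (use False in auto)
  finally show ?thesis
    by simp
qed (use finite_UNIV_card_ge_0[where ?'a = 'a] in auto)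

lemma pow_card_pow_same: "(x::'a::{field,finite}) ^ (CARD('a) ^ n) = x"
  by (induction n) (simp_all add: pow_card_same power_mult)

lemma frob_sum:
  assumes "CHAR('a::{field,finite}) = p" "prime p"
  shows "(sum f A :: 'a) ^ (p ^ j) = (\<Sum>i\<in>A. f i ^ (p ^ j))"
  using freshmans_dream_sum'[of "p^j" j f A] assms by simp

lemma frob_add:
  assumes "CHAR('a::{field,finite}) = p" "prime p"
  shows "((x::'a) + y) ^ (p ^ j) = x ^ (p ^ j) + y ^ (p ^ j)"
  using freshmans_dream'[of "p^j" j x y] assms by simp

lemma sum_pow_zero:
  assumes "j < CARD('a::{field,finite}) - 1"
  shows "(\<Sum>x\<in>UNIV. (x::'a) ^ j) = 0"
proof (cases "j = 0")
  case True
  have "of_nat CARD('a) = (0::'a)"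
    by (rule of_nat_card_zero)
  thus ?thesis using True by simp
next
  case False
  have "\<exists>a::'a. a \<noteq> 0 \<and> a ^ j \<noteq> 1"
  proof (rule ccontr)
    assume "\<not> ?thesis"
    hence sub: "UNIV - {0} \<subseteq> {x::'a. poly (monom 1 j - 1) x = 0}"
      by (auto simp: poly_monom)
    have ne: "monom (1::'a) j - 1 \<noteq> 0"
    proof
      assume "monom (1::'a) j - 1 = 0"
      hence "coeff (monom (1::'a) j - 1) j = 0" by simp
      thus False using False by (simp add: coeff_monom)
    qed
    have "degree (monom (1::'a) j - 1) \<le> j"
      by (rule degree_le) (auto simp: coeff_monom)
    hence "card {x::'a. poly (monom 1 j - 1) x = 0} \<le> j"
      using card_poly_roots_bound[OF ne] by linarith
    moreover have "card (UNIV - {0::'a}) \<le> card {x::'a. poly (monom 1 j - 1) x = 0}"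
      by (rule card_mono[OF _ sub]) simp
    moreover have "card (UNIV - {0::'a}) = CARD('a) - 1" by (simp add: card_Diff_singleton)
    ultimately show False using assms by linarith
  qed
  then obtain a :: 'a where a: "a \<noteq> 0" "a ^ j \<noteq> 1" by blast
  have "(\<Sum>x\<in>UNIV. (a * x) ^ j) = (\<Sum>x\<in>UNIV. x ^ j)"
    by (rule sum.reindex_bij_witness[of _ "\<lambda>y. y / a" "\<lambda>y. a * y"]) (use a in auto)
  hence "a ^ j * (\<Sum>x\<in>UNIV. x ^ j) = 1 * (\<Sum>x\<in>UNIV. x ^ j)"
    by (simp add: power_mult_distrib sum_distrib_left)
  thus ?thesis using a(2) by (metis mult_cancel_right)
qed

lemma sum_poly_zero:
  assumes "degree P < CARD('a::{field,finite}) - 1"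
  shows "(\<Sum>x\<in>UNIV. poly P (x::'a)) = 0"
proof -
  have "(\<Sum>x\<in>UNIV. poly P (x::'a)) = (\<Sum>x\<in>UNIV. \<Sum>i\<le>degree P. coeff P i * x ^ i)"
    by (simp add: poly_altdef)
  also have "\<dots> = (\<Sum>i\<le>degree P. coeff P i * (\<Sum>x\<in>UNIV. x ^ i))"
    by (subst sum.swap) (simp add: sum_distrib_left)
  also have "\<dots> = 0"
    using assms by (intro sum.neutral) (auto simp: sum_pow_zero)
  finally show ?thesis .
qed



locale setting =
  fixes p m t q :: nat and ty :: "'a::{field,finite} itself"
  assumes pr: "prime p" and m1: "m \<ge> 1" and t1: "t \<ge> 1"
    and card: "CARD('a) = p ^ (m * t)" and q: "q = p ^ m"
begin

abbreviation T :: "'a \<Rightarrow> 'a" where "T \<equiv> trace_FB q t"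

lemma CH: "CHAR('a) = p"
  using char_eq[OF pr card] m1 t1 by simp

lemma cardq: "CARD('a) = q ^ t" using card q by (simp add: power_mult)

lemma q2: "q \<ge> 2"
proof -
  have "p \<ge> 2" using pr prime_ge_2_nat by blast
  moreover have "p ^ 1 \<le> p ^ m" using m1 \<open>p \<ge> 2\<close> by (intro power_increasing) auto
  ultimately show ?thesis using q by simp
qed

lemma frobq_add: "((x::'a) + y) ^ (q ^ i) = x ^ (q ^ i) + y ^ (q ^ i)"
  using frob_add[OF CH pr, of x y "m*i"] q by (simp add: power_mult)

lemma frobq_sum: "(sum f A :: 'a) ^ (q ^ i) = (\<Sum>j\<in>A. f j ^ (q ^ i))"
  using frob_sum[OF CH pr, of f A "m*i"] q by (simp add: power_mult)

lemma tr_add: "T (x + y) = T x + T y"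
  by (simp add: trace_FB_def frobq_add sum.distrib)

lemma tr_zero: "T 0 = 0"
  using q2 by (simp add: trace_FB_def power_0_left)

lemma tr_sum: "T (sum f A) = (\<Sum>j\<in>A. T (f j))"
  by (induction A rule: infinite_finite_induct) (simp_all add: tr_zero tr_add)

lemma tr_minus: "T (- x) = - T x"
  using tr_add[of x "-x"] tr_zero by (simp add: eq_neg_iff_add_eq_0 add.commute)

lemma tr_diff: "T (x - y) = T x - T y"
  using tr_add[of x "-y"] tr_minus[of y] by simp

lemma fix_pow: "(b::'a) ^ q = b \<Longrightarrow> b ^ (q ^ i) = b"
proof (induction i)
  case (Suc i)
  have "b ^ (q ^ Suc i) = (b ^ q) ^ (q ^ i)" by (simp only: power_Suc power_mult)
  thus ?case using Suc by simp
qed simp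

lemma tr_smult: "(b::'a) ^ q = b \<Longrightarrow> T (b * x) = b * T x"
  by (simp add: trace_FB_def power_mult_distrib fix_pow sum_distrib_left)

lemma tr_in_B: "T x \<in> subfield_GF p m"
proof -
  have "(T x) ^ q = (\<Sum>i<t. (x ^ (q ^ i)) ^ q)"
    unfolding trace_FB_def using frobq_sum[of _ _ 1] by simp
  also have "\<dots> = (\<Sum>i<t. x ^ (q ^ Suc i))"
    by (simp only: power_mult[symmetric] power_Suc2)
  also have "\<dots> = T x"
  proof -
    have "x ^ (q ^ t) = x" using pow_card_same[of x] cardq by simp
    moreover have "(\<Sum>i<t. x ^ (q ^ Suc i)) + x ^ (q ^ 0) = (\<Sum>i<Suc t. x ^ (q ^ i))"
      by (simp only: sum.lessThan_Suc_shift add.commute)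
    moreover have "(\<Sum>i<Suc t. x ^ (q ^ i)) = T x + x ^ (q ^ t)"
      by (simp add: trace_FB_def)
    ultimately show ?thesis by simp
  qed
  finally show ?thesis unfolding subfield_GF_def q by simp
qed

lemma inB_pow: "b \<in> subfield_GF p m \<Longrightarrow> (b::'a) ^ q = b"
  by (simp add: subfield_GF_def q)

lemma tr_tr_mult: "T (T y * x) = T y * T x"
  using tr_smult[OF inB_pow[OF tr_in_B]] .

lemma tr_one: "p dvd t \<Longrightarrow> T 1 = 0"
proof -
  assume "p dvd t"
  hence "of_nat t = (0::'a)" using CH of_nat_eq_0_iff_char_dvd by blast
  thus ?thesis by (simp add: trace_FB_def)
qed

lemma tr_nonzero: "\<exists>z. T z \<noteq> 0"
proof (rule ccontr)
  assume "\<not> ?thesis"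
  hence all: "\<forall>z. T z = 0" by simp
  define P where "P = (\<Sum>i<t. monom (1::'a) (q ^ i))"
  have pP: "poly P z = T z" for z
    by (simp add: P_def poly_sum poly_monom trace_FB_def)
  have inj: "inj (\<lambda>i. q ^ i)" using q2 by (simp add: inj_on_def power_inject_exp)
  have "coeff P (q ^ (t - 1)) = (\<Sum>i<t. if q ^ i = q ^ (t-1) then 1 else 0)"
    by (simp add: P_def coeff_sum coeff_monom)
  also have "\<dots> = (\<Sum>i\<in>{t-1}. 1)"
    apply (rule sum.mono_neutral_cong_right)
    using t1 q2 by (auto simp: power_inject_exp)
  finally have c1: "coeff P (q ^ (t - 1)) = 1" by simp
  hence ne: "P \<noteq> 0" by auto
  have "degree P \<le> q ^ (t - 1)"
  proof (rule degree_le, intro allI impI)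
    fix j assume "q ^ (t - 1) < j"
    moreover have "q ^ i \<le> q ^ (t - 1)" if "i < t" for i
      using that q2 by (intro power_increasing) auto
    ultimately show "coeff P j = 0"
      by (auto simp: P_def coeff_sum coeff_monom intro!: sum.neutral) (meson leD)
  qed
  moreover have "card {x::'a. poly P x = 0} \<le> degree P" by (rule card_poly_roots_bound[OF ne])
  moreover have "{x::'a. poly P x = 0} = UNIV" using all pP by auto
  moreover have "q ^ (t - 1) < q ^ t" using q2 t1 by (intro power_strict_increasing) auto
  ultimately show False using cardq by simp
qed

lemma tr_nondeg:
  assumes "\<forall>b. T (b * y) = T (b * y')"
  shows "y = y'"
proof (rule ccontr)
  assume ne: "y \<noteq> y'"
  obtain z where z: "T z \<noteq> 0" using tr_nonzero by blast
  have "T ((z / (y - y')) * y) = T ((z / (y - y')) * y')" using assms by blast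
  hence "T ((z / (y - y')) * y) - T ((z / (y - y')) * y') = 0" by simp
  hence "T ((z / (y - y')) * (y - y')) = 0" by (simp add: tr_diff[symmetric] right_diff_distrib)
  thus False using ne z by simp
qed

end


context setting
begin

lemma GW:
  assumes deg: "degree f < CARD('a) - CARD('a) div q"
  shows "T (b * poly f a) = - (\<Sum>x\<in>UNIV-{a}. T (b*(x-a)) * T (poly f x / (x-a)))"
proof -
  define G where "G = (\<Sum>i<t. smult (b^(q^i)) ([:-a,1:]^(q^i - 1)))"
  define N where "N = q ^ (t - 1)"
  have cN: "CARD('a) = q * N" using cardq t1 unfolding N_def
    by (metis Suc_diff_1 less_le_trans power_Suc zero_less_one)
  have dN: "CARD('a) div q = N" using cN q2 by simp
  have N1: "N \<ge> 1" using q2 unfolding N_def by simp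
  have qpos: "q ^ i > 0" for i using q2 by simp
  have Gx: "poly G x = T (b*(x-a)) / (x-a)" if "x \<noteq> a" for x
  proof -
    have "poly G x * (x - a) = (\<Sum>i<t. b^(q^i) * ((x-a)^(q^i - 1) * (x - a)))"
      by (simp add: G_def poly_sum sum_distrib_right mult.assoc)
    also have "\<dots> = (\<Sum>i<t. (b * (x-a))^(q^i))"
      by (intro sum.cong refl) (metis power_minus_mult qpos power_mult_distrib)
    also have "\<dots> = T (b*(x-a))" by (simp add: trace_FB_def)
    finally show ?thesis using that by (simp add: eq_divide_eq)
  qed
  have Ga: "poly G a = b"
  proof -
    obtain t' where t': "t = Suc t'" using t1 by (cases t) auto
    have "poly G a = (\<Sum>i<t. b^(q^i) * 0 ^ (q^i - 1))" by (simp add: G_def poly_sum)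
    also have "\<dots> = b + (\<Sum>i<t'. b^(q^Suc i) * 0 ^ (q^Suc i - 1))"
      unfolding t' by (simp only: sum.lessThan_Suc_shift) simp
    also have "(\<Sum>i<t'. b^(q^Suc i) * 0 ^ (q^Suc i - 1)) = 0"
    proof (intro sum.neutral ballI)
      fix i assume "i \<in> {..<t'}"
      have "q ^ Suc i \<ge> q" using q2 by (simp add: power_increasing[of 1, simplified])
      hence "q ^ Suc i - 1 \<noteq> 0" using q2 by linarith
      thus "b^(q^Suc i) * 0 ^ (q^Suc i - 1) = 0" by simp
    qed
    finally show ?thesis by simp
  qed
  have degG: "degree G \<le> N - 1"
    unfolding G_def
  proof (rule degree_sum_le)
    fix i assume "i \<in> {..<t}"
    hence "q ^ i \<le> N" unfolding N_def using q2 by (intro power_increasing) auto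
    moreover have "degree (smult (b^(q^i)) ([:-a,1:]^(q^i - 1))) \<le> q^i - 1"
      using degree_smult_le degree_linear_power by (metis)
    ultimately show "degree (smult (b^(q^i)) ([:-a,1:]^(q^i - 1))) \<le> N - 1" by linarith
  qed simp
  have "degree (f * G) < CARD('a) - 1"
  proof -
    have "q * N \<ge> 2 * N" using q2 by simp
    moreover have "degree (f * G) \<le> degree f + degree G" by (rule degree_mult_le)
    ultimately show ?thesis using deg degG cN dN N1 by linarith
  qed
  hence "(\<Sum>x\<in>UNIV. poly (f * G) x) = 0" by (rule sum_poly_zero)
  hence "poly f a * poly G a + (\<Sum>x\<in>UNIV-{a}. poly f x * poly G x) = 0"
    by (simp add: sum.remove[of UNIV a])
  hence "b * poly f a = - (\<Sum>x\<in>UNIV-{a}. poly f x * poly G x)"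
    using Ga by (simp add: mult.commute eq_neg_iff_add_eq_0)
  also have "(\<Sum>x\<in>UNIV-{a}. poly f x * poly G x) = (\<Sum>x\<in>UNIV-{a}. T (b*(x-a)) * (poly f x / (x-a)))"
    by (intro sum.cong) (auto simp: Gx)
  finally have "T (b * poly f a) = T (- (\<Sum>x\<in>UNIV-{a}. T (b*(x-a)) * (poly f x / (x-a))))"
    by simp
  also have "\<dots> = - (\<Sum>x\<in>UNIV-{a}. T (b*(x-a)) * T (poly f x / (x-a)))"
    by (simp only: tr_minus tr_sum tr_tr_mult)
  finally show ?thesis .
qed

end


definition gg :: "nat \<Rightarrow> nat \<Rightarrow> 'a::{field,finite} \<Rightarrow> 'a \<Rightarrow> 'a \<Rightarrow> 'a" where
  "gg q t a \<beta> x = trace_FB q t (x / (\<beta> - a))"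

definition hh :: "nat \<Rightarrow> nat \<Rightarrow> nat \<Rightarrow> nat \<Rightarrow> 'a::{field,finite} \<Rightarrow> 'a \<Rightarrow> ('a \<Rightarrow> 'a) \<Rightarrow> 'a" where
  "hh p m q t a b d = (let v = - (\<Sum>x\<in>UNIV-{a,b}. trace_FB q t (inverse (a-b) * (x-a)) * d x)
     in if v \<in> subfield_GF p m then v else 0)"

definition rr :: "nat \<Rightarrow> nat \<Rightarrow> 'a::{field,finite} \<Rightarrow> 'a \<Rightarrow> ('a \<Rightarrow> 'a) \<Rightarrow> 'a \<Rightarrow> 'a" where
  "rr q t a b d e = (SOME y. \<forall>z. trace_FB q t (z*y) =
     - (\<Sum>x\<in>UNIV-{a,b}. trace_FB q t (z*(x-a)) * d x) - trace_FB q t (z*(b-a)) * e)"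

context setting
begin

lemma node_recover:
  fixes a b :: 'a and f :: "'a poly"
  assumes pt: "p dvd t" and ab: "a \<noteq> b"
    and deg: "degree f < CARD('a) - CARD('a) div q"
  shows "rr q t a b (\<lambda>\<beta>. if \<beta> \<in> UNIV-{a,b} then gg q t a \<beta> (poly f \<beta>) else 0)
           (hh p m q t b a (\<lambda>\<beta>. if \<beta> \<in> UNIV-{a,b} then gg q t b \<beta> (poly f \<beta>) else 0)) = poly f a"
proof -
  define S where "S = UNIV - {a, b}"
  have S': "UNIV - {b, a} = S" unfolding S_def by auto
  have Sa: "UNIV - {a} = insert b S" "b \<notin> S" unfolding S_def using ab by auto
  have Sb: "UNIV - {b} = insert a S" "a \<notin> S" unfolding S_def using ab by auto
  define e where "e = T (poly f b / (b - a))"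
  have tm1: "T (-1) = 0" using tr_minus[of 1] tr_one[OF pt] by simp
  have B: "hh p m q t b a (\<lambda>\<beta>. if \<beta> \<in> S then gg q t b \<beta> (poly f \<beta>) else 0) = e"
  proof -
    have "T (inverse (b-a) * poly f b) = - (\<Sum>x\<in>UNIV-{b}. T (inverse (b-a)*(x-b)) * T (poly f x / (x-b)))"
      by (rule GW[OF deg])
    also have "\<dots> = - (\<Sum>x\<in>S. T (inverse (b-a)*(x-b)) * T (poly f x / (x-b)))"
    proof -
      have "inverse (b-a)*(a-b) = -1" using ab by (simp add: field_simps)
      thus ?thesis unfolding Sb(1) using Sb(2) tm1 by (simp add: S_def)
    qed
    finally have v: "- (\<Sum>x\<in>S. T (inverse (b-a)*(x-b)) * (if x \<in> S then gg q t b x (poly f x) else 0)) = e"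
      unfolding e_def gg_def by (simp add: divide_inverse mult.commute)
    have "e \<in> subfield_GF p m" unfolding e_def by (rule tr_in_B)
    thus ?thesis unfolding hh_def S' using v by (simp add: Let_def)
  qed
  have A: "T (z * poly f a) = - (\<Sum>x\<in>S. T (z*(x-a)) * (if x \<in> S then gg q t a x (poly f x) else 0))
             - T (z*(b-a)) * e" for z
  proof -
    have "T (z * poly f a) = - (\<Sum>x\<in>UNIV-{a}. T (z*(x-a)) * T (poly f x / (x-a)))"
      by (rule GW[OF deg])
    also have "\<dots> = - (\<Sum>x\<in>S. T (z*(x-a)) * T (poly f x / (x-a))) - T (z*(b-a)) * e"
      unfolding Sa(1) using Sa(2) by (simp add: e_def)
    finally show ?thesis by (simp add: gg_def)
  qed
  have "rr q t a b (\<lambda>\<beta>. if \<beta> \<in> S then gg q t a \<beta> (poly f \<beta>) else 0) e = poly f a"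
    unfolding rr_def S_def[symmetric]
  proof (rule someI2[where a = "poly f a"])
    show "\<forall>z. T (z * poly f a) = - (\<Sum>x\<in>S. T (z*(x-a)) * (if x \<in> S then gg q t a x (poly f x) else 0))
             - T (z*(b-a)) * e" using A by blast
  next
    fix y assume "\<forall>z. T (z * y) = - (\<Sum>x\<in>S. T (z*(x-a)) * (if x \<in> S then gg q t a x (poly f x) else 0))
             - T (z*(b-a)) * e"
    hence "\<forall>z. T (z * y) = T (z * poly f a)" using A by simp
    thus "y = poly f a" by (rule tr_nondeg)
  qed
  thus ?thesis using B unfolding S_def by simp
qed

end


theorem theorem3:
  fixes p m t :: nat and a_star a_bar :: "'a::{field,finite}"
  assumes "prime p" and "m \<ge> 1" and "t \<ge> 1"
    and "CARD('a) = p ^ (m * t)"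
    and "p dvd t"
    and "a_star \<noteq> a_bar"
  shows "distributed_repair_two (subfield_GF p m :: 'a set)
           (RS_code (CARD('a) - CARD('a) div p ^ m)) a_star a_bar
         \<and> repair_two_bandwidth a_star a_bar = 2 * (CARD('a) - 1)"
proof
  interpret setting p m t "p^m" "TYPE('a)"
    using assms by unfold_locales auto
  have ins: "{a_bar, a_star} = {a_star, a_bar}" by auto
  show "distributed_repair_two (subfield_GF p m :: 'a set)
           (RS_code (CARD('a) - CARD('a) div p ^ m)) a_star a_bar"
  proof -
    have G1: "\<forall>\<beta> x. gg (p^m) t a_star \<beta> x \<in> subfield_GF p m \<and> gg (p^m) t a_bar \<beta> x \<in> subfield_GF p m"
      unfolding gg_def by (simp add: tr_in_B)
    have H: "\<forall>d. hh p m (p^m) t a_star a_bar d \<in> subfield_GF p m \<and> hh p m (p^m) t a_bar a_star d \<in> subfield_GF p m"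
      using prime_gt_0_nat[OF assms(1)] unfolding hh_def Let_def by (auto simp: subfield_GF_def)
    have R: "\<forall>c\<in>RS_code (CARD('a) - CARD('a) div p ^ m). let S = UNIV - {a_star, a_bar};
              d1 = (\<lambda>\<beta>. if \<beta> \<in> S then gg (p^m) t a_star \<beta> (c \<beta>) else 0);
              d2 = (\<lambda>\<beta>. if \<beta> \<in> S then gg (p^m) t a_bar \<beta> (c \<beta>) else 0)
          in rr (p^m) t a_star a_bar d1 (hh p m (p^m) t a_bar a_star d2) = c a_star
           \<and> rr (p^m) t a_bar a_star d2 (hh p m (p^m) t a_star a_bar d1) = c a_bar"
    proof
      fix c :: "'a \<Rightarrow> 'a" assume "c \<in> RS_code (CARD('a) - CARD('a) div p ^ m)"
      then obtain f where c: "c = (\<lambda>\<alpha>. poly f \<alpha>)" and deg: "degree f < CARD('a) - CARD('a) div p ^ m"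
        unfolding RS_code_def by blast
      have 1: "rr (p^m) t a_star a_bar (\<lambda>\<beta>. if \<beta> \<in> UNIV-{a_star,a_bar} then gg (p^m) t a_star \<beta> (poly f \<beta>) else 0)
             (hh p m (p^m) t a_bar a_star (\<lambda>\<beta>. if \<beta> \<in> UNIV-{a_star,a_bar} then gg (p^m) t a_bar \<beta> (poly f \<beta>) else 0)) = poly f a_star"
        by (rule node_recover[OF assms(5) assms(6) deg])
      have 2: "rr (p^m) t a_bar a_star (\<lambda>\<beta>. if \<beta> \<in> UNIV-{a_bar,a_star} then gg (p^m) t a_bar \<beta> (poly f \<beta>) else 0)
             (hh p m (p^m) t a_star a_bar (\<lambda>\<beta>. if \<beta> \<in> UNIV-{a_bar,a_star} then gg (p^m) t a_star \<beta> (poly f \<beta>) else 0)) = poly f a_bar"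
        by (rule node_recover[OF assms(5) assms(6)[symmetric] deg])
      show "let S = UNIV - {a_star, a_bar};
                d1 = (\<lambda>\<beta>. if \<beta> \<in> S then gg (p^m) t a_star \<beta> (c \<beta>) else 0);
                d2 = (\<lambda>\<beta>. if \<beta> \<in> S then gg (p^m) t a_bar \<beta> (c \<beta>) else 0)
            in rr (p^m) t a_star a_bar d1 (hh p m (p^m) t a_bar a_star d2) = c a_star
             \<and> rr (p^m) t a_bar a_star d2 (hh p m (p^m) t a_star a_bar d1) = c a_bar"
        using 1 2 unfolding c Let_def ins by simp
    qed
    show ?thesis unfolding distributed_repair_two_def
      by (rule exI[of _ "gg (p^m) t a_star"], rule exI[of _ "gg (p^m) t a_bar"],
        rule exI[of _ "hh p m (p^m) t a_star a_bar"], rule exI[of _ "hh p m (p^m) t a_bar a_star"],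
        rule exI[of _ "rr (p^m) t a_star a_bar"], rule exI[of _ "rr (p^m) t a_bar a_star"])
        (intro conjI G1 H R)
  qed
next
  have "card (UNIV - {a_star, a_bar}) = CARD('a) - 2"
    using assms(6) by (simp add: card_Diff_subset)
  moreover have "CARD('a) \<ge> 2"
  proof -
    have "card {a_star, a_bar} \<le> CARD('a)" by (rule card_mono) auto
    thus ?thesis using assms(6) by simp
  qed
  ultimately show "repair_two_bandwidth a_star a_bar = 2 * (CARD('a) - 1)"
    unfolding repair_two_bandwidth_def by simp
qed

end
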